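(* Let $S_1$ and $S_2$ be path strings containing no symbolic links that refer to the same file on the file system, where $S_2$ is canonical and $S_1$ may or may not be canonical. Run the main loop of sanitize on $S_1$. Then at every iteration $i$ of the loop, one of the following holds: (1) the string representation of the stack is a prefix of $S_2$; or (2) if a directory token pushed onto the stack made the string representation of the stack cease to be a prefix of $S_2$, then this directory token is eventually popped off the stack by a subsequent ".." token.
   Context: Path strings are strings over valid filename characters together with "." and "/". Tokenization splits a path string on every maximal run of consecutive "/" characters, discarding empty pieces. A path string is canonical if it is "/" or of the form "/$a_1$/$a_2$/.../$a_n$" with $n\ge1$, where each $a_j$ is a nonempty filename containing no "/" and different from "." and "..". The main loop of sanitize on a path string $U$: start with an empty stack and process the tokens of $U$ from left to right; if the token is "..", pop the top of the stack if the stack is nonempty (otherwise do nothing); if the token is ".", do nothing; otherwise push the token. The string representation of a stack with contents $t_1,\dots,t_m$ (bottom to top) is "/" if $m=0$ and "/$t_1$/$t_2$/.../$t_m$" if $m\ge1$. A string $A$ is a prefix of a string $B$ if $|A|\le|B|$ and $A[j]=B[j]$ for every position $j$ of $A$ (character-wise prefix). Path strings are interpreted in a hierarchical (tree-shaped) file system rooted at "/", with no symbolic links: starting at the root, a filename token moves to the child of that name, "." stays in the current directory, and ".." moves to the parent directory (the parent of the root being the root). Two path strings refer to the same file if this resolution leads to the same file. *)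

theory Defs
  imports Main
begin

fun split_slash :: "string \<Rightarrow> string list" where
  "split_slash [] = [[]]"
| "split_slash (c # cs) =
     (if c = CHR ''/'' then [] # split_slash cs
      else (case split_slash cs of [] \<Rightarrow> [[c]] | (w # ws) \<Rightarrow> (c # w) # ws))"

definition tokens :: "string \<Rightarrow> string list" where
  "tokens s = filter (\<lambda>w. w \<noteq> []) (split_slash s)"

definition valid_name :: "string \<Rightarrow> bool" where
  "valid_name a \<longleftrightarrow> a \<noteq> [] \<and> CHR ''/'' \<notin> set a \<and> a \<noteq> ''.'' \<and> a \<noteq> ''..''"

text \<open>String representation of a stack (list bottom-to-top).\<close>
definition stack_str :: "string list \<Rightarrow> string" where
  "stack_str st = (if st = [] then ''/'' else concat (map (\<lambda>t. CHR ''/'' # t) st))"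

definition canonical :: "string \<Rightarrow> bool" where
  "canonical s \<longleftrightarrow> s = ''/'' \<or> (\<exists>as. as \<noteq> [] \<and> (\<forall>a\<in>set as. valid_name a) \<and> s = stack_str as)"

definition str_prefix :: "string \<Rightarrow> string \<Rightarrow> bool" where
  "str_prefix A B \<longleftrightarrow> length A \<le> length B \<and> (\<forall>j<length A. A ! j = B ! j)"

definition san_step :: "string list \<Rightarrow> string \<Rightarrow> string list" where
  "san_step st t = (if t = ''..'' then butlast st else if t = ''.'' then st else st @ [t])"

definition san_stack :: "string \<Rightarrow> nat \<Rightarrow> string list" where
  "san_stack U i = foldl san_step [] (take i (tokens U))"

text \<open>A tree-shaped file system without symbolic links: a file (node) is identified
  by the list of names on its path from the root; the set of existing nodes
  contains the root and is closed under taking parents (prefixes).\<close>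
definition file_system :: "string list set \<Rightarrow> bool" where
  "file_system fs \<longleftrightarrow> [] \<in> fs \<and> (\<forall>p q. p @ q \<in> fs \<longrightarrow> p \<in> fs)"

definition res_step :: "string list set \<Rightarrow> string list option \<Rightarrow> string \<Rightarrow> string list option" where
  "res_step fs cur t = (case cur of None \<Rightarrow> None | Some c \<Rightarrow>
      (if t = ''.'' then Some c
       else if t = ''..'' then Some (butlast c)
       else if c @ [t] \<in> fs then Some (c @ [t]) else None))"

definition resolve :: "string list set \<Rightarrow> string \<Rightarrow> string list option" where
  "resolve fs s = foldl (res_step fs) (Some []) (tokens s)"

definition same_file :: "string list set \<Rightarrow> string \<Rightarrow> string \<Rightarrow> bool" where
  "same_file fs s1 s2 \<longleftrightarrow> resolve fs s1 \<noteq> None \<and> resolve fs s1 = resolve fs s2"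

end

theory Submission
  imports Defs
begin


lemma split_slash_ne: "split_slash s \<noteq> []"
  by (induction s) (auto split: list.split)

lemma split_slash_app: "CHR ''/'' \<notin> set t \<Longrightarrow>
  split_slash (t @ s) = (t @ hd (split_slash s)) # tl (split_slash s)"
proof (induction t)
  case Nil
  then show ?case using split_slash_ne[of s] by simp
next
  case (Cons a t)
  then show ?case by (auto split: list.split)
qed

lemma split_slash_stack: "\<forall>a\<in>set as. valid_name a \<Longrightarrow>
  split_slash (concat (map (\<lambda>t. CHR ''/'' # t) as)) = (if as = [] then [[]] else [] # as)"
proof (induction as)
  case Nil
  then show ?case by simp
next
  case (Cons a as)
  then have "CHR ''/'' \<notin> set a" by (simp add: valid_name_def)
  then show ?case using Cons by (simp add: split_slash_app)
qed

lemma tokens_stack: "\<forall>a\<in>set as. valid_name a \<Longrightarrow>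
  tokens (concat (map (\<lambda>t. CHR ''/'' # t) as)) = as"
proof -
  assume a: "\<forall>a\<in>set as. valid_name a"
  then have "filter (\<lambda>w. w \<noteq> []) as = as" by (auto simp: valid_name_def)
  then show ?thesis using a by (simp add: tokens_def split_slash_stack)
qed

lemma res_none: "foldl (res_step fs) None xs = None"
  by (induction xs) (auto simp: res_step_def)

lemma res_valid: "\<forall>a\<in>set as. valid_name a \<Longrightarrow> foldl (res_step fs) (Some c) as = Some c' \<Longrightarrow> c' = c @ as"
proof (induction as arbitrary: c)
  case Nil
  then show ?case by simp
next
  case (Cons a as)
  show ?case
  proof (cases "c @ [a] \<in> fs")
    case True
    have "a \<noteq> ''.''" "a \<noteq> ''..''" using Cons.prems(1) by (auto simp: valid_name_def)
    then have "res_step fs (Some c) a = Some (c @ [a])" using True by (simp add: res_step_def)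
    then have "foldl (res_step fs) (Some (c @ [a])) as = Some c'"
      using Cons.prems(2) by simp
    then show ?thesis using Cons.IH[of "c @ [a]"] Cons.prems(1) by simp
  next
    case False
    have "a \<noteq> ''.''" "a \<noteq> ''..''" using Cons.prems(1) by (auto simp: valid_name_def)
    then have "res_step fs (Some c) a = None" using False by (simp add: res_step_def)
    then show ?thesis using Cons.prems(2) by (simp add: res_none)
  qed
qed

lemma res_san: "foldl (res_step fs) (Some c) xs \<noteq> None \<Longrightarrow>
   foldl (res_step fs) (Some c) xs = Some (foldl san_step c xs)"
  by (induction xs arbitrary: c) (auto simp: res_step_def san_step_def res_none split: if_splits)

lemma str_prefix_iff: "str_prefix A B \<longleftrightarrow> (\<exists>C. B = A @ C)"
proof
  assume "str_prefix A B"
  then have "take (length A) B = A"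
    by (auto simp: str_prefix_def intro: nth_equalityI)
  then show "\<exists>C. B = A @ C" by (metis append_take_drop_id)
next
  assume "\<exists>C. B = A @ C"
  then show "str_prefix A B" by (auto simp: str_prefix_def nth_append)
qed

lemma stack_str_prefix: "str_prefix (stack_str p) (stack_str (p @ q))"
proof (cases "p = []")
  case True
  then show ?thesis
    by (cases q) (auto simp: stack_str_def str_prefix_iff)
next
  case False
  then show ?thesis
    by (cases "q = []") (auto simp: stack_str_def str_prefix_iff)
qed

lemma str_prefix_trans: "str_prefix A B \<Longrightarrow> str_prefix B C \<Longrightarrow> str_prefix A C"
  by (auto simp: str_prefix_iff)

lemma last_below:
  fixes f :: "nat \<Rightarrow> nat"
  assumes "f 0 \<le> d" "d < f i"
  shows "\<exists>j<i. f j \<le> d \<and> (\<forall>l. j < l \<and> l \<le> i \<longrightarrow> d < f l)"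
  using assms
proof (induction i)
  case 0
  then show ?case by simp
next
  case (Suc i)
  show ?case
  proof (cases "f i \<le> d")
    case True
    then show ?thesis using Suc by (intro exI[of _ i]) (auto simp: le_Suc_eq)
  next
    case False
    then obtain j where "j < i" "f j \<le> d" "\<forall>l. j < l \<and> l \<le> i \<longrightarrow> d < f l"
      using Suc by auto
    then show ?thesis using Suc.prems by (intro exI[of _ j]) (auto simp: le_Suc_eq)
  qed
qed

lemma first_below:
  fixes f :: "nat \<Rightarrow> nat"
  shows "i \<le> n \<Longrightarrow> f n \<le> d \<Longrightarrow> d < f i \<Longrightarrow>
    \<exists>k. i \<le> k \<and> k < n \<and> f (Suc k) \<le> d \<and> (\<forall>l. i \<le> l \<and> l \<le> k \<longrightarrow> d < f l)"
proof (induction n rule: less_induct)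
  case (less n)
  show ?case
  proof (cases "\<exists>l. i \<le> l \<and> l < n \<and> f l \<le> d")
    case True
    then obtain l where "i \<le> l" "l < n" "f l \<le> d" by auto
    then obtain k where "i \<le> k \<and> k < l \<and> f (Suc k) \<le> d \<and> (\<forall>l. i \<le> l \<and> l \<le> k \<longrightarrow> d < f l)"
      using less by blast
    then show ?thesis using \<open>l < n\<close> by (intro exI[of _ k]) auto
  next
    case False
    have "n \<noteq> i" using less.prems by auto
    then have "i < n" using less.prems by auto
    have "\<forall>l. i \<le> l \<and> l \<le> n - 1 \<longrightarrow> d < f l"
    proof (intro allI impI)
      fix l assume "i \<le> l \<and> l \<le> n - 1"
      then have "i \<le> l" "l < n" using \<open>i < n\<close> by auto
      then show "d < f l" using False by auto
    qed
    then show ?thesis using \<open>i < n\<close> less.prems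
      by (intro exI[of _ "n - 1"]) auto
  qed
qed


lemma san_stack_Suc: "l < length (tokens U) \<Longrightarrow>
  san_stack U (Suc l) = san_step (san_stack U l) (tokens U ! l)"
  by (simp add: san_stack_def take_Suc_conv_app_nth)

lemma san_stack_full: "san_stack U (length (tokens U)) = foldl san_step [] (tokens U)"
  by (simp add: san_stack_def)

theorem lemma3:
  fixes fs :: "string list set" and S1 S2 :: string and i :: nat
  assumes "file_system fs"
    and "canonical S2"
    and "same_file fs S1 S2"
    and "i \<le> length (tokens S1)"
  shows "str_prefix (stack_str (san_stack S1 i)) S2 \<or>
    (\<exists>j<i. (tokens S1 ! j) \<noteq> ''.'' \<and> (tokens S1 ! j) \<noteq> ''..''
        \<and> str_prefix (stack_str (san_stack S1 j)) S2
        \<and> \<not> str_prefix (stack_str (san_stack S1 (Suc j))) S2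
        \<and> (\<forall>l. Suc j \<le> l \<and> l \<le> i \<longrightarrow> length (san_stack S1 l) > length (san_stack S1 j))
        \<and> (\<exists>k. i \<le> k \<and> k < length (tokens S1) \<and> tokens S1 ! k = ''..''
              \<and> length (san_stack S1 k) = Suc (length (san_stack S1 j))
              \<and> (\<forall>l. Suc j \<le> l \<and> l \<le> k \<longrightarrow> length (san_stack S1 l) > length (san_stack S1 j))))"
proof -
  define toks where "toks = tokens S1"
  define n where "n = length toks"
  define st where "st = san_stack S1"
  define good where "good p = str_prefix (stack_str p) S2" for p
  define f where "f l = length (st l)" for l
  have stS: "st (Suc l) = san_step (st l) (toks ! l)" if "l < n" for l
    using that san_stack_Suc unfolding st_def toks_def n_def by blast
  have good_take: "good (take m p)" if "good p" for m p
    using that stack_str_prefix[of "take m p" "drop m p"] str_prefix_trans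
    unfolding good_def by fastforce
  obtain c where rc1: "resolve fs S1 = Some c" and rc2: "resolve fs S2 = Some c"
    using assms(3) unfolding same_file_def by (metis option.exhaust)
  have stn: "st n = c"
    using res_san[of fs "[]" "tokens S1"] rc1 san_stack_full[of S1]
    unfolding resolve_def st_def n_def toks_def by simp
  have goodc: "good c"
  proof (cases "S2 = ''/''")
    case True
    have "tokens S2 = []" using True by (simp add: tokens_def)
    then have "c = []" using rc2 by (simp add: resolve_def)
    then show ?thesis using True by (simp add: good_def stack_str_def str_prefix_def)
  next
    case False
    then obtain as where as: "as \<noteq> []" "\<forall>a\<in>set as. valid_name a" "S2 = stack_str as"
      using assms(2) unfolding canonical_def by auto
    then have "tokens S2 = as" by (simp add: stack_str_def tokens_stack)
    then have "c = as" using res_valid[of as fs "[]" c] rc2 as(2) by (simp add: resolve_def)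
    then show ?thesis using as by (simp add: good_def str_prefix_def)
  qed
  have len_step: "f (Suc l) \<le> Suc (f l)" if "l < n" for l
    using stS[OF that] by (auto simp: f_def san_step_def)
  have len_up: "f (Suc l) = Suc (f l) \<and> toks ! l \<noteq> ''.'' \<and> toks ! l \<noteq> ''..'' \<and> st (Suc l) = st l @ [toks ! l]"
    if "l < n" "f l < f (Suc l)" for l
    using stS[OF that(1)] that(2) by (auto simp: f_def san_step_def split: if_splits)
  have len_down: "toks ! l = ''..'' \<and> f l = Suc (f (Suc l))"
    if "l < n" "f (Suc l) < f l" for l
    using stS[OF that(1)] that(2) by (auto simp: f_def san_step_def split: if_splits)
  show ?thesis
  proof (cases "good (st i)")
    case True
    then show ?thesis unfolding good_def st_def by simp
  next
    case False
    have ex: "\<exists>m. \<not> good (take m (st i))" using False by (intro exI[of _ "length (st i)"]) simp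
    define m where "m = (LEAST m. \<not> good (take m (st i)))"
    have m1: "\<not> good (take m (st i))" unfolding m_def using ex by (rule LeastI_ex)
    have g0: "good []" using goodc good_take[of c 0] by simp
    have "m \<noteq> 0" using m1 g0 by (metis take0)
    then obtain d where md: "m = Suc d" by (cases m) auto
    have gd: "good (take d (st i))" using md not_less_Least[of d "\<lambda>m. \<not> good (take m (st i))"]
      unfolding m_def by auto
    have "d < f i"
    proof (rule ccontr)
      assume "\<not> d < f i"
      then have "take d (st i) = st i" by (simp add: f_def)
      then show False using gd False by simp
    qed
    have "f 0 = 0" by (simp add: f_def st_def san_stack_def)
    then obtain j where j: "j < i" "f j \<le> d" "\<forall>l. j < l \<and> l \<le> i \<longrightarrow> d < f l"
      using last_below[of f d i] \<open>d < f i\<close> by auto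
    have jn: "j < n" using j assms(4) unfolding n_def toks_def by simp
    have fj1: "d < f (Suc j)" using j by auto
    with len_step[OF jn] j have fjd: "f j = d" by linarith
    from len_up[OF jn] fj1 fjd have up: "f (Suc j) = Suc d" "toks ! j \<noteq> ''.''" "toks ! j \<noteq> ''..''"
      "st (Suc j) = st j @ [toks ! j]" by auto
    have pres: "take (Suc d) (st l) = st (Suc j)"
      if "Suc j \<le> l" "l \<le> n" "\<forall>l'. Suc j \<le> l' \<and> l' \<le> l \<longrightarrow> d < f l'" for l
      using that
    proof (induction l rule: dec_induct)
      case base
      then show ?case using up by (simp add: f_def)
    next
      case (step l)
      have ln: "l < n" using step by simp
      have IH: "take (Suc d) (st l) = st (Suc j)" using step by auto
      have a: "d < f l" "d < f (Suc l)" using step by auto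
      show ?case
      proof (cases "toks ! l = ''..''")
        case True
        then have "st (Suc l) = butlast (st l)" using stS[OF ln] by (simp add: san_step_def)
        moreover have "Suc d < length (st l)" using a \<open>st (Suc l) = butlast (st l)\<close>
          by (simp add: f_def)
        ultimately show ?thesis using IH by (simp add: take_butlast)
      next
        case False
        then have "st (Suc l) = st l \<or> st (Suc l) = st l @ [toks ! l]"
          using stS[OF ln] by (auto simp: san_step_def)
        then show ?thesis using IH a by (auto simp: f_def)
      qed
    qed
    have stj1: "st (Suc j) = take (Suc d) (st i)"
      using pres[of i] j assms(4) unfolding n_def toks_def by auto
    have stj: "st j = take d (st i)"
    proof -
      have "take d (st (Suc j)) = st j" using up fjd by (simp add: f_def)
      then show ?thesis using stj1 by simp
    qed
    have ngj1: "\<not> good (st (Suc j))" using stj1 m1 md by simp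
    have gj: "good (st j)" using stj gd by simp
    have "\<exists>l. i \<le> l \<and> l \<le> n \<and> f l \<le> d"
    proof (rule ccontr)
      assume "\<not> ?thesis"
      then have "\<forall>l'. Suc j \<le> l' \<and> l' \<le> n \<longrightarrow> d < f l'" using j
        by (metis Suc_le_eq not_le nat_le_linear)
      then have "take (Suc d) (st n) = st (Suc j)" using pres[of n] j assms(4)
        unfolding n_def toks_def by auto
      then show False using good_take[OF goodc, of "Suc d"] stn ngj1 by simp
    qed
    then obtain l where l: "i \<le> l" "l \<le> n" "f l \<le> d" by auto
    obtain k where k: "i \<le> k" "k < l" "f (Suc k) \<le> d" "\<forall>l. i \<le> l \<and> l \<le> k \<longrightarrow> d < f l"
      using first_below[of i l f d] l \<open>d < f i\<close> by auto
    have kn: "k < n" using k l by simp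
    have "d < f k" using k by simp
    with len_down[OF kn] k(3) have kd: "toks ! k = ''..''" "f k = Suc (f (Suc k))" by auto
    with k(3) len_step[OF kn] \<open>d < f k\<close> have fk: "f k = Suc d" by simp
    have all: "\<forall>l'. Suc j \<le> l' \<and> l' \<le> k \<longrightarrow> d < f l'"
      using j k by (metis Suc_le_eq nat_le_linear)
    have "\<exists>j<i. (toks ! j) \<noteq> ''.'' \<and> (toks ! j) \<noteq> ''..''
        \<and> good (st j) \<and> \<not> good (st (Suc j))
        \<and> (\<forall>l. Suc j \<le> l \<and> l \<le> i \<longrightarrow> f l > f j)
        \<and> (\<exists>k. i \<le> k \<and> k < n \<and> toks ! k = ''..''
              \<and> f k = Suc (f j)
              \<and> (\<forall>l. Suc j \<le> l \<and> l \<le> k \<longrightarrow> f l > f j))"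
      using j up gj ngj1 fjd k kn kd fk all by (intro exI[of _ j]) auto
    then show ?thesis unfolding good_def f_def st_def toks_def n_def by blast
  qed
qed

end
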